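(* Let $1\le p<\infty$, let $T:\mathcal V(\mathbb{R}^n)\to\mathcal V(\mathbb{R}^n)$ be a rearrangement and let $\mathcal W$ be a family of rearrangements from $\mathcal V(\mathbb{R}^n)$ to $\mathcal V(\mathbb{R}^n)$. The following are equivalent: (i) $T$ is approximable in $L^p$ on $L^p_+(\mathbb{R}^n)$ by maps in $\mathcal W$; (ii) $\diamond_T$ is approximable on $\mathcal L^n$ by maps in $\{\diamond_W:W\in\mathcal W\}$; (iii) $\diamond_T$ is approximable on $\mathcal C^n$ by maps in $\{\diamond_W:W\in\mathcal W\}$. The equivalence remains true if "approximable" is replaced throughout by "sequentially approximable". Moreover, (i)$\Rightarrow$(ii)$\Leftrightarrow$(iii) also holds with "approximable" replaced throughout by "weakly approximable".
   Context: $\mathcal V(\mathbb{R}^n)$: nonnegative measurable $f$ on $\mathbb{R}^n$ with $\mathcal H^n(\{f>t\})<\infty$ for all $t>0$. A rearrangement is a map $T$ that is equimeasurable ($\mathcal H^n(\{Tf>t\})=\mathcal H^n(\{f>t\})$ for all $t$) and monotonic ($f\le g$ a.e. implies $Tf\le Tg$ a.e.). $\mathcal L^n$: measurable sets of finite measure; $\mathcal C^n$: nonempty compact sets. The induced set map is $\diamond_TA=\{x:T1_A(x)=1\}$. For maps on functions: $T$ is approximable in $L^p$ on $X$ by $\mathcal W$ if there are $T_k\in\mathcal W$ with $\|T_kf-Tf\|_p\to0$ for all $f\in X$; weakly approximable if the $T_k$ may depend on $f$; sequentially approximable if $T_k=S_k\circ\cdots\circ S_1$ for a fixed sequence $(S_k)$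 in $\mathcal W$. For set maps the same notions are defined with $\|1_{\diamond_kA}-1_{\diamond A}\|_1\to0$ for all $A$ in the class. *)

theory Defs
  imports "HOL-Analysis.Analysis"
begin

text \<open>The ambient space R^n is an arbitrary Euclidean space 'a; Hausdorff measure H^n
  is Lebesgue measure.\<close>

definition V_fun :: "('a::euclidean_space \<Rightarrow> real) set" where
  "V_fun = {f. f \<in> borel_measurable lebesgue \<and> (\<forall>x. 0 \<le> f x) \<and>
               (\<forall>t>0. emeasure lebesgue {x. f x > t} < \<infinity>)}"

definition rearrangement :: "(('a::euclidean_space \<Rightarrow> real) \<Rightarrow> ('a \<Rightarrow> real)) \<Rightarrow> bool" where
  "rearrangement T \<longleftrightarrow>
     (\<forall>f\<in>V_fun. T f \<in> V_fun) \<and>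
     (\<forall>f\<in>V_fun. \<forall>t. emeasure lebesgue {x. T f x > t} = emeasure lebesgue {x. f x > t}) \<and>
     (\<forall>f\<in>V_fun. \<forall>g\<in>V_fun. (AE x in lebesgue. f x \<le> g x) \<longrightarrow> (AE x in lebesgue. T f x \<le> T g x))"

definition diamond :: "(('a::euclidean_space \<Rightarrow> real) \<Rightarrow> ('a \<Rightarrow> real)) \<Rightarrow> 'a set \<Rightarrow> 'a set" where
  "diamond T A = {x. T (indicator A) x = 1}"

definition Lp_plus :: "real \<Rightarrow> ('a::euclidean_space \<Rightarrow> real) set" where
  "Lp_plus p = {f. f \<in> borel_measurable lebesgue \<and> (\<forall>x. 0 \<le> f x) \<and>
                   (\<integral>\<^sup>+ x. ennreal (\<bar>f x\<bar> powr p) \<partial>lebesgue) < \<infinity>}"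

definition fin_meas_sets :: "('a::euclidean_space) set set" where
  "fin_meas_sets = {A. A \<in> sets lebesgue \<and> emeasure lebesgue A < \<infinity>}"

definition compact_sets :: "('a::euclidean_space) set set" where
  "compact_sets = {K. K \<noteq> {} \<and> compact K}"

text \<open>p-th power of the L^p distance (tends to 0 iff the L^p norm does).\<close>
definition Lp_dist_pow :: "real \<Rightarrow> ('a::euclidean_space \<Rightarrow> real) \<Rightarrow> ('a \<Rightarrow> real) \<Rightarrow> ennreal" where
  "Lp_dist_pow p f g = (\<integral>\<^sup>+ x. ennreal (\<bar>f x - g x\<bar> powr p) \<partial>lebesgue)"

definition ind_dist :: "('a::euclidean_space) set \<Rightarrow> 'a set \<Rightarrow> ennreal" where
  "ind_dist A B = (\<integral>\<^sup>+ x. ennreal \<bar>indicator A x - indicator B x :: real\<bar> \<partial>lebesgue)"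

primrec seqcomp :: "(nat \<Rightarrow> 'b \<Rightarrow> 'b) \<Rightarrow> nat \<Rightarrow> 'b \<Rightarrow> 'b" where
  "seqcomp S 0 = id"
| "seqcomp S (Suc k) = S k \<circ> seqcomp S k"

definition approximable :: "('b \<Rightarrow> 'b \<Rightarrow> ennreal) \<Rightarrow> 'b set \<Rightarrow> ('b \<Rightarrow> 'b) set \<Rightarrow> ('b \<Rightarrow> 'b) \<Rightarrow> bool" where
  "approximable d X W T \<longleftrightarrow>
     (\<exists>Tk. (\<forall>k. Tk k \<in> W) \<and> (\<forall>f\<in>X. (\<lambda>k. d (Tk k f) (T f)) \<longlonglongrightarrow> 0))"

definition weakly_approximable :: "('b \<Rightarrow> 'b \<Rightarrow> ennreal) \<Rightarrow> 'b set \<Rightarrow> ('b \<Rightarrow> 'b) set \<Rightarrow> ('b \<Rightarrow> 'b) \<Rightarrow> bool" where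
  "weakly_approximable d X W T \<longleftrightarrow>
     (\<forall>f\<in>X. \<exists>Tk. (\<forall>k. Tk k \<in> W) \<and> (\<lambda>k. d (Tk k f) (T f)) \<longlonglongrightarrow> 0)"

definition seq_approximable :: "('b \<Rightarrow> 'b \<Rightarrow> ennreal) \<Rightarrow> 'b set \<Rightarrow> ('b \<Rightarrow> 'b) set \<Rightarrow> ('b \<Rightarrow> 'b) \<Rightarrow> bool" where
  "seq_approximable d X W T \<longleftrightarrow>
     (\<exists>S. (\<forall>k. S k \<in> W) \<and> (\<forall>f\<in>X. (\<lambda>k. d (seqcomp S (Suc k) f) (T f)) \<longlonglongrightarrow> 0))"

end

theory Submission
  imports Defs
begin

declare emeasure_completion[simp del]

lemma sigma_finite_lebesgue: "sigma_finite_measure (lebesgue :: 'a::euclidean_space measure)"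
proof (rule sigma_finite_measure.intro, intro exI[of _ "range (\<lambda>n::nat. cball (0::'a) (real n))"] conjI)
  show "countable (range (\<lambda>n::nat. cball (0::'a) (real n)))" by simp
  show "range (\<lambda>n::nat. cball (0::'a) (real n)) \<subseteq> sets lebesgue" by auto
  show "\<Union> (range (\<lambda>n::nat. cball (0::'a) (real n))) = space lebesgue"
    by (auto simp: dist_norm intro: real_arch_simple)
  show "\<forall>a\<in>range (\<lambda>n::nat. cball (0::'a) (real n)). emeasure lebesgue a \<noteq> \<infinity>"
    using lmeasurable_compact[of "cball (0::'a) _"] by (auto simp: fmeasurable_def) (metis order.irrefl)
qed

interpretation leb: sigma_finite_measure "lebesgue :: 'a::euclidean_space measure"
  by (rule sigma_finite_lebesgue)

interpretation lebborel: pair_sigma_finite "lebesgue :: 'a::euclidean_space measure" lborel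
  by (intro pair_sigma_finite.intro sigma_finite_lebesgue lborel.sigma_finite_measure_axioms)

lemma V_funD:
  assumes "f \<in> V_fun"
  shows "f \<in> borel_measurable lebesgue" "\<And>x. 0 \<le> f x"
    "\<And>t. t > 0 \<Longrightarrow> emeasure lebesgue {x. f x > t} < \<infinity>"
  using assms by (auto simp: V_fun_def)

lemma rearrD:
  assumes "rearrangement R"
  shows "\<And>f. f\<in>V_fun \<Longrightarrow> R f \<in> V_fun"
    "\<And>f t. f \<in> V_fun \<Longrightarrow> emeasure lebesgue {x. R f x > t} = emeasure lebesgue {x. f x > t}"
    "\<And>f g. f\<in>V_fun \<Longrightarrow> g\<in>V_fun \<Longrightarrow> AE x in lebesgue. f x \<le> g x \<Longrightarrow> AE x in lebesgue. R f x \<le> R g x"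
  using assms unfolding rearrangement_def by blast+

lemma fin_measD: assumes "A \<in> fin_meas_sets" shows "A \<in> sets lebesgue" "emeasure lebesgue A < \<infinity>"
  using assms by (auto simp: fin_meas_sets_def)

lemma scaled_ind_V:
  assumes "A \<in> fin_meas_sets" "c \<ge> 0"
  shows "(\<lambda>x. c * indicator A x) \<in> V_fun"
proof -
  have A: "A \<in> sets lebesgue" "emeasure lebesgue A < \<infinity>" using fin_measD[OF assms(1)] .
  have "emeasure lebesgue {x. c * indicator A x > t} < \<infinity>" if "t > 0" for t :: real
  proof -
    have "{x. c * indicator A x > t} \<subseteq> A" using that by (auto simp: indicator_def split: if_splits)
    then have "emeasure lebesgue {x. c * indicator A x > t} \<le> emeasure lebesgue A"
      using A by (intro emeasure_mono) auto
    then show ?thesis using A by auto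
  qed
  then show ?thesis using A assms(2) unfolding V_fun_def by (auto simp: indicator_def)
qed

lemma ind_V: "A \<in> fin_meas_sets \<Longrightarrow> indicator A \<in> V_fun"
  using scaled_ind_V[of A 1] by simp

lemma ae_subset_eq:
  fixes M :: "'b measure"
  assumes "X \<in> sets M" "Y \<in> sets M" "AE x in M. x \<in> X \<longrightarrow> x \<in> Y"
    "emeasure M X = emeasure M Y" "emeasure M Y < \<infinity>"
  shows "AE x in M. x \<in> X \<longleftrightarrow> x \<in> Y"
proof -
  have e: "emeasure M (X \<inter> Y) = emeasure M X"
    using assms by (intro emeasure_eq_AE) auto
  have "emeasure M (Y - X) = emeasure M (Y - (X \<inter> Y))" by (metis Diff_Int2 Int_absorb)
  also have "\<dots> = emeasure M Y - emeasure M (X \<inter> Y)"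
    using assms emeasure_mono[of "X \<inter> Y" Y M] by (intro emeasure_Diff) auto
  also have "\<dots> = 0" using e assms by simp
  finally have "Y - X \<in> null_sets M" using assms by auto
  then have "AE x in M. x \<notin> Y - X" by (rule AE_not_in)
  then show ?thesis using assms(3) by eventually_elim auto
qed

lemma ae_subset_diff:
  fixes M :: "'b measure"
  assumes "X \<in> sets M" "Y \<in> sets M" "AE x in M. x \<in> X \<longrightarrow> x \<in> Y" "emeasure M Y < \<infinity>"
  shows "emeasure M (Y - X) = emeasure M Y - emeasure M X"
proof -
  have e: "emeasure M (X \<inter> Y) = emeasure M X"
    using assms by (intro emeasure_eq_AE) auto
  have "emeasure M (Y - X) = emeasure M (Y - (X \<inter> Y))" by (metis Diff_Int2 Int_absorb)
  also have "\<dots> = emeasure M Y - emeasure M (X \<inter> Y)"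
    using assms emeasure_mono[of "X \<inter> Y" Y M] by (intro emeasure_Diff) auto
  finally show ?thesis using e by simp
qed

lemma meas_level[measurable]:
  "(f::'b \<Rightarrow> real) \<in> borel_measurable M \<Longrightarrow> {x \<in> space M. t < f x} \<in> sets M" by measurable

lemma leb_level: "f \<in> borel_measurable lebesgue \<Longrightarrow> {x. t < (f x::real)} \<in> sets lebesgue"
  using meas_level[of f lebesgue t] by simp

lemma leb_eqset: "f \<in> borel_measurable lebesgue \<Longrightarrow> {x. f x = (t::real)} \<in> sets lebesgue"
proof -
  assume f: "f \<in> borel_measurable lebesgue"
  have "{x \<in> space lebesgue. f x = t} \<in> sets lebesgue" using f by measurable
  then show ?thesis by simp
qed

lemma scaled_level:
  fixes c t :: real
  assumes "c \<ge> 0"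
  shows "{x. t < c * indicator E x} = (if t < 0 then UNIV else if t < c then E else {})"
  using assms by (auto simp: indicator_def)

lemma shape:
  assumes R: "rearrangement R" and E: "E \<in> fin_meas_sets" and c: "c > 0"
  defines "g \<equiv> R (\<lambda>x. c * indicator E x)"
  shows "AE x in lebesgue. g x = 0 \<or> g x = c"
    and "emeasure lebesgue {x. g x = c} = emeasure lebesgue E"
    and "AE x in lebesgue. g x = c * indicator {y. g y = c} x"
proof -
  have V: "(\<lambda>x. c * indicator E x) \<in> V_fun" using scaled_ind_V[OF E] c by simp
  have gV: "g \<in> V_fun" unfolding g_def using rearrD(1)[OF R V] .
  note gm = V_funD(1)[OF gV] and g0 = V_funD(2)[OF gV]
  have Em: "E \<in> sets lebesgue" "emeasure lebesgue E < \<infinity>" using fin_measD[OF E] by auto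
  have lev: "emeasure lebesgue {x. g x > t} = (if t < 0 then emeasure lebesgue (UNIV::'a set) else if t < c then emeasure lebesgue E else 0)" for t
    unfolding g_def rearrD(2)[OF R V] scaled_level[OF less_imp_le[OF c]] by simp
  have "emeasure lebesgue {x. g x > c} = 0" unfolding lev using c by simp
  then have N1: "{x. g x > c} \<in> null_sets lebesgue" using leb_level[OF gm] by (intro null_setsI)
  define F where "F n = {x. g x > 0} - {x. g x > c * (1 - 1 / (real n + 2))}" for n :: nat
  have NF: "F n \<in> null_sets lebesgue" for n
  proof -
    have pos: "0 \<le> c * (1 - 1 / (real n + 2))" "c * (1 - 1 / (real n + 2)) < c"
      using c by (auto simp: field_simps)
    have lc: "emeasure lebesgue {x. g x > c * (1 - 1 / (real n + 2))} = emeasure lebesgue E"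
      unfolding lev using pos by auto
    have "emeasure lebesgue (F n) = emeasure lebesgue {x. g x > 0} - emeasure lebesgue {x. g x > c * (1 - 1 / (real n + 2))}"
      unfolding F_def using pos g0 leb_level[OF gm] lev[of 0] lc c Em
      by (intro emeasure_Diff) (auto intro: le_less_trans[OF pos(1)])
    also have "\<dots> = 0" using lev[of 0] lc c Em by simp
    finally show ?thesis unfolding F_def using leb_level[OF gm] by auto
  qed
  have "{x. g x > c} \<union> (\<Union>n. F n) \<in> null_sets lebesgue" using N1 NF by auto
  moreover have "{x \<in> space lebesgue. \<not> (g x = 0 \<or> g x = c)} \<subseteq> {x. g x > c} \<union> (\<Union>n. F n)"
  proof
    fix x assume "x \<in> {x \<in> space lebesgue. \<not> (g x = 0 \<or> g x = c)}"
    then have x: "g x \<noteq> 0" "g x \<noteq> c" by auto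
    show "x \<in> {x. g x > c} \<union> (\<Union>n. F n)"
    proof (cases "c < g x")
      case True then show ?thesis by auto
    next
      case False
    then have gx: "0 < g x" "g x < c" using g0[of x] x by auto
    then have "1 - g x / c > 0" using c by (auto simp: field_simps)
    then obtain n :: nat where n0: "inverse (real (Suc n)) < 1 - g x / c"
      using reals_Archimedean by blast
    have "1 / (real n + 2) \<le> inverse (real (Suc n))" by (simp add: field_simps)
    then have n: "1 / (real n + 2) < 1 - g x / c" using n0 by linarith
    then have "g x \<le> c * (1 - 1 / (real n + 2))" using c by (auto simp: field_simps)
    then have "x \<in> F n" using gx by (auto simp: F_def)
    then show ?thesis by blast
  qed
  qed
  ultimately show ae: "AE x in lebesgue. g x = 0 \<or> g x = c" by (rule AE_I')
  have "emeasure lebesgue {x. g x = c} = emeasure lebesgue {x. g x > c / 2}"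
    using ae c leb_eqset[OF gm, of c] leb_level[OF gm, of "c/2"] by (intro emeasure_eq_AE) auto
  also have "\<dots> = emeasure lebesgue E" using lev[of "c/2"] c by simp
  finally show "emeasure lebesgue {x. g x = c} = emeasure lebesgue E" .
  show "AE x in lebesgue. g x = c * indicator {y. g y = c} x"
    using ae by eventually_elim (auto simp: indicator_def)
qed

lemma diamond_props:
  assumes R: "rearrangement R" and E: "E \<in> fin_meas_sets"
  shows "AE x in lebesgue. R (indicator E) x = indicator (diamond R E) x"
    and "emeasure lebesgue (diamond R E) = emeasure lebesgue E"
    and "diamond R E \<in> fin_meas_sets"
    and "AE x in lebesgue. R (indicator E) x = 0 \<or> R (indicator E) x = 1"
proof -
  have eq: "(\<lambda>x. 1 * indicator E x :: real) = indicator E" by simp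
  note sh = shape[OF R E zero_less_one, unfolded eq]
  show "AE x in lebesgue. R (indicator E) x = indicator (diamond R E) x"
    using sh(3) unfolding diamond_def by simp
  show em: "emeasure lebesgue (diamond R E) = emeasure lebesgue E"
    using sh(2) unfolding diamond_def by simp
  have "R (indicator E) \<in> V_fun" using rearrD(1)[OF R ind_V[OF E]] .
  then have "diamond R E \<in> sets lebesgue" unfolding diamond_def
    using leb_eqset V_funD(1) by blast
  then show "diamond R E \<in> fin_meas_sets" using em fin_measD[OF E] by (auto simp: fin_meas_sets_def)
  show "AE x in lebesgue. R (indicator E) x = 0 \<or> R (indicator E) x = 1" using sh(1) .
qed

lemma diamond_scaled:
  assumes R: "rearrangement R" and E: "E \<in> fin_meas_sets" and c: "c > 0"
  shows "AE x in lebesgue. R (\<lambda>x. c * indicator E x) x = c * indicator (diamond R E) x"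
proof -
  define g where "g = R (\<lambda>x. c * indicator E x)"
  define B where "B = {x. g x = c}"
  note sh = shape[OF R E c, folded g_def, folded B_def]
  note dp = diamond_props[OF R E]
  have V: "(\<lambda>x. c * indicator E x) \<in> V_fun" using scaled_ind_V[OF E] c by simp
  have gV: "g \<in> V_fun" unfolding g_def using rearrD(1)[OF R V] .
  have Bm: "B \<in> sets lebesgue" unfolding B_def using leb_eqset V_funD(1)[OF gV] by blast
  have dm: "diamond R E \<in> sets lebesgue" "emeasure lebesgue (diamond R E) < \<infinity>"
    using fin_measD[OF dp(3)] by auto
  have BE: "AE x in lebesgue. x \<in> B \<longleftrightarrow> x \<in> diamond R E"
  proof (cases "c \<le> 1")
    case True
    have "AE x in lebesgue. g x \<le> R (indicator E) x" unfolding g_def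
      using True by (intro rearrD(3)[OF R V ind_V[OF E]]) (auto simp: indicator_def)
    then have "AE x in lebesgue. x \<in> B \<longrightarrow> x \<in> diamond R E"
        using dp(1)
    proof eventually_elim
      case (elim x)
      show ?case
      proof
        assume "x \<in> B"
        then have "c \<le> indicator (diamond R E) x" using elim by (simp add: B_def)
        then show "x \<in> diamond R E" using c by (cases "x \<in> diamond R E") auto
      qed
    qed
    then show ?thesis using Bm dm sh(2) dp(2) by (intro ae_subset_eq) auto
  next
    case False
    have "AE x in lebesgue. R (indicator E) x \<le> g x" unfolding g_def
      using False by (intro rearrD(3)[OF R ind_V[OF E] V]) (auto simp: indicator_def)
    then have "AE x in lebesgue. x \<in> diamond R E \<longrightarrow> x \<in> B"
      using dp(1) sh(3)
    proof eventually_elim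
      case (elim x)
      show ?case
      proof
        assume "x \<in> diamond R E"
        then have "1 \<le> c * indicator B x" using elim by simp
        then show "x \<in> B" by (cases "x \<in> B") auto
      qed
    qed
    then have "AE x in lebesgue. x \<in> diamond R E \<longleftrightarrow> x \<in> B"
      using Bm dm sh(2) dp(2) by (intro ae_subset_eq) auto
    then show ?thesis by eventually_elim auto
  qed
  show ?thesis using BE sh(3) unfolding g_def[symmetric]
    by eventually_elim (simp add: indicator_def)
qed

lemma rearr_ae_cong:
  assumes R: "rearrangement R" and f: "f \<in> V_fun" and g: "g \<in> V_fun"
    and fg: "AE x in lebesgue. f x = g x"
  shows "AE x in lebesgue. R f x = R g x"
proof -
  have "AE x in lebesgue. R f x \<le> R g x" using fg by (intro rearrD(3)[OF R f g]) auto
  moreover have "AE x in lebesgue. R g x \<le> R f x" using fg by (intro rearrD(3)[OF R g f]) auto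
  ultimately show ?thesis by eventually_elim auto
qed

lemma diamond_ae_cong:
  assumes R: "rearrangement R" and A: "A \<in> fin_meas_sets" and B: "B \<in> fin_meas_sets"
    and AB: "AE x in lebesgue. x \<in> A \<longleftrightarrow> x \<in> B"
  shows "AE x in lebesgue. x \<in> diamond R A \<longleftrightarrow> x \<in> diamond R B"
proof -
  have "AE x in lebesgue. indicator A x = (indicator B x :: real)"
    using AB by eventually_elim (auto simp: indicator_def)
  then have "AE x in lebesgue. R (indicator A) x = R (indicator B) x"
    by (rule rearr_ae_cong[OF R ind_V[OF A] ind_V[OF B]])
  then show ?thesis by eventually_elim (auto simp: diamond_def)
qed

lemma diamond_mono:
  assumes R: "rearrangement R" and A: "A \<in> fin_meas_sets" and B: "B \<in> fin_meas_sets"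
    and AB: "A \<subseteq> B"
  shows "AE x in lebesgue. x \<in> diamond R A \<longrightarrow> x \<in> diamond R B"
proof -
  have "AE x in lebesgue. R (indicator A) x \<le> R (indicator B) x"
    using AB by (intro rearrD(3)[OF R ind_V[OF A] ind_V[OF B]]) (auto simp: indicator_def)
  then show ?thesis using diamond_props(1)[OF R A] diamond_props(1)[OF R B]
  proof eventually_elim
    case (elim x)
    then show ?case by (cases "x \<in> diamond R B"; cases "x \<in> diamond R A") auto
  qed
qed

lemma ind_dist_eq:
  assumes "A \<in> sets lebesgue" "B \<in> sets lebesgue"
  shows "ind_dist A B = emeasure lebesgue ((A - B) \<union> (B - A))"
proof -
  have "ind_dist A B = (\<integral>\<^sup>+ x. indicator ((A - B) \<union> (B - A)) x \<partial>lebesgue)"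
    unfolding ind_dist_def by (intro nn_integral_cong) (auto simp: indicator_def)
  also have "\<dots> = emeasure lebesgue ((A - B) \<union> (B - A))" using assms by (intro nn_integral_indicator) auto
  finally show ?thesis .
qed

lemma ind_dist_ae_cong:
  assumes "AE x in lebesgue. x \<in> A \<longleftrightarrow> x \<in> A'" "AE x in lebesgue. x \<in> B \<longleftrightarrow> x \<in> B'"
  shows "ind_dist A B = ind_dist A' B'"
  unfolding ind_dist_def using assms by (intro nn_integral_cong_AE) (auto simp: indicator_def)

lemma ind_dist_triangle:
  assumes "A \<in> sets lebesgue" "B \<in> sets lebesgue" "C \<in> sets lebesgue"
  shows "ind_dist A C \<le> ind_dist A B + ind_dist B C"
proof -
  have "ind_dist A C \<le> (\<integral>\<^sup>+ x. ennreal \<bar>indicator A x - indicator B x :: real\<bar> + ennreal \<bar>indicator B x - indicator C x :: real\<bar> \<partial>lebesgue)"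
    unfolding ind_dist_def by (intro nn_integral_mono) (auto simp: indicator_def)
  also have "\<dots> = ind_dist A B + ind_dist B C" unfolding ind_dist_def
    using assms by (intro nn_integral_add) auto
  finally show ?thesis .
qed

lemma ind_dist_sym: "ind_dist A B = ind_dist B A"
  unfolding ind_dist_def by (simp add: abs_minus_commute)

lemma diamond_nonexp:
  assumes R: "rearrangement R" and A: "A \<in> fin_meas_sets" and B: "B \<in> fin_meas_sets"
  shows "ind_dist (diamond R A) (diamond R B) \<le> ind_dist A B"
proof -
  define C where "C = A \<inter> B"
  define D where "D = A \<union> B"
  have Am: "A \<in> sets lebesgue" "emeasure lebesgue A < \<infinity>" and Bm: "B \<in> sets lebesgue" "emeasure lebesgue B < \<infinity>"
    using fin_measD A B by auto
  have Cm: "C \<in> sets lebesgue" using Am Bm by (auto simp: C_def)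
  have Dm: "D \<in> sets lebesgue" using Am Bm by (auto simp: D_def)
  have "emeasure lebesgue D \<le> emeasure lebesgue A + emeasure lebesgue B"
    unfolding D_def using Am Bm by (intro emeasure_subadditive) auto
  then have Dfin: "emeasure lebesgue D < \<infinity>" using Am Bm le_less_trans by fastforce
  have Cfin: "emeasure lebesgue C < \<infinity>" using Am Cm emeasure_mono[of C A lebesgue] by (auto simp: C_def)
  have C: "C \<in> fin_meas_sets" "D \<in> fin_meas_sets" using Cm Dm Cfin Dfin by (auto simp: fin_meas_sets_def)
  note dA = diamond_props[OF R A] and dB = diamond_props[OF R B]
    and dC = diamond_props[OF R C(1)] and dD = diamond_props[OF R C(2)]
  have m: "diamond R A \<in> sets lebesgue" "diamond R B \<in> sets lebesgue" "diamond R C \<in> sets lebesgue" "diamond R D \<in> sets lebesgue"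
    using fin_measD dA(3) dB(3) dC(3) dD(3) by auto
  have sub: "C \<subseteq> A" "C \<subseteq> B" "A \<subseteq> D" "B \<subseteq> D" "C \<subseteq> D" by (auto simp: C_def D_def)
  have "AE x in lebesgue. x \<in> (diamond R A - diamond R B) \<union> (diamond R B - diamond R A) \<longrightarrow> x \<in> diamond R D - diamond R C"
    using diamond_mono[OF R C(1) A sub(1)] diamond_mono[OF R C(1) B sub(2)] diamond_mono[OF R A C(2) sub(3)] diamond_mono[OF R B C(2) sub(4)]
    by eventually_elim blast
  then have "ind_dist (diamond R A) (diamond R B) \<le> emeasure lebesgue (diamond R D - diamond R C)"
    unfolding ind_dist_eq[OF m(1,2)] using m by (intro emeasure_mono_AE) auto
  also have "\<dots> = emeasure lebesgue (diamond R D) - emeasure lebesgue (diamond R C)"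
    using m diamond_mono[OF R C(1) C(2) sub(5)] fin_measD(2)[OF dD(3)] by (intro ae_subset_diff) auto
  also have "\<dots> = emeasure lebesgue D - emeasure lebesgue C" using dC(2) dD(2) by simp
  also have "\<dots> = emeasure lebesgue (D - C)" using Cm Dm Dfin Cfin sub(5) by (intro emeasure_Diff[symmetric]) auto
  also have "\<dots> = ind_dist A B" unfolding ind_dist_eq[OF Am(1) Bm(1)] by (rule arg_cong[where f="emeasure lebesgue"]) (auto simp: C_def D_def)
  finally show ?thesis .
qed

lemma level_fin: "f \<in> V_fun \<Longrightarrow> t > 0 \<Longrightarrow> {x. t < f x} \<in> fin_meas_sets"
  using V_funD leb_level unfolding fin_meas_sets_def by blast

lemma level_commute:
  assumes R: "rearrangement R" and f: "f \<in> V_fun" and t: "t > 0"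
  shows "AE x in lebesgue. (t < R f x) \<longleftrightarrow> x \<in> diamond R {x. t < f x}"
proof -
  define A where "A = {x. t < f x}"
  define E where "E n = {x. t + 1 / real (Suc n) < f x}" for n
  define Y where "Y = {x. t < R f x}"
  have fm: "f \<in> borel_measurable lebesgue" using V_funD(1)[OF f] .
  have Af: "A \<in> fin_meas_sets" unfolding A_def using level_fin[OF f t] .
  have cpos: "t + 1 / real (Suc n) > 0" for n using t by (simp add: add_pos_pos)
  have Ef: "E n \<in> fin_meas_sets" for n unfolding E_def using level_fin[OF f cpos] .
  have EA: "E n \<subseteq> A" for n unfolding E_def A_def
    by (auto intro: less_trans[rotated] simp: add_pos_pos)
  have RfV: "R f \<in> V_fun" using rearrD(1)[OF R f] .
  have Ym: "Y \<in> sets lebesgue" unfolding Y_def using leb_level V_funD(1)[OF RfV] by blast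
  have dA: "diamond R A \<in> fin_meas_sets" using diamond_props(3)[OF R Af] .
  have dAm: "diamond R A \<in> sets lebesgue" using fin_measD(1)[OF dA] .
  have dEm: "diamond R (E n) \<in> sets lebesgue" for n using fin_measD(1)[OF diamond_props(3)[OF R Ef]] .
  have incl: "AE x in lebesgue. x \<in> diamond R (E n) \<longrightarrow> x \<in> Y" for n
  proof -
    have V: "(\<lambda>x. (t + 1 / real (Suc n)) * indicator (E n) x) \<in> V_fun"
      using scaled_ind_V[OF Ef[of n]] less_imp_le[OF cpos[of n]] by blast
    have "AE x in lebesgue. R (\<lambda>x. (t + 1 / real (Suc n)) * indicator (E n) x) x \<le> R f x"
    proof (intro rearrD(3)[OF R V f] AE_I2)
      fix x
      show "(t + 1 / real (Suc n)) * indicator (E n) x \<le> f x"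
      proof (cases "x \<in> E n")
        case True then show ?thesis by (simp add: E_def less_imp_le)
      next
        case False then show ?thesis by (simp add: V_funD(2)[OF f])
      qed
    qed
    then show ?thesis using diamond_scaled[OF R Ef[of n] cpos[of n]]
    proof eventually_elim
      case (elim x)
      show ?case
      proof
        assume "x \<in> diamond R (E n)"
        then have "t + 1 / real (Suc n) \<le> R f x" using elim by simp
        moreover have "t < t + 1 / real (Suc n)" by simp
        ultimately have "t < R f x" by linarith
        then show "x \<in> Y" unfolding Y_def by simp
      qed
    qed
  qed
  define N where "N = diamond R A - Y"
  have Nm: "N \<in> sets lebesgue" unfolding N_def using dAm Ym by auto
  have bound: "emeasure lebesgue N \<le> emeasure lebesgue (A - E n)" for n
  proof -
    have "AE x in lebesgue. x \<in> N \<longrightarrow> x \<in> (diamond R A - diamond R (E n)) \<union> (diamond R (E n) - diamond R A)"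
      using incl[of n] by eventually_elim (auto simp: N_def)
    then have "emeasure lebesgue N \<le> ind_dist (diamond R A) (diamond R (E n))"
      unfolding ind_dist_eq[OF dAm dEm] using dAm dEm by (intro emeasure_mono_AE) auto
    also have "\<dots> \<le> ind_dist A (E n)" by (rule diamond_nonexp[OF R Af Ef])
    also have "\<dots> = emeasure lebesgue (A - E n)"
      unfolding ind_dist_eq[OF fin_measD(1)[OF Af] fin_measD(1)[OF Ef]] using EA[of n]
      by (intro arg_cong[where f="emeasure lebesgue"]) auto
    finally show ?thesis .
  qed
  have lim: "(\<lambda>n. emeasure lebesgue (A - E n)) \<longlonglongrightarrow> 0"
  proof -
    have "(\<lambda>n. emeasure lebesgue (A - E n)) \<longlonglongrightarrow> emeasure lebesgue (\<Inter>n. A - E n)"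
    proof (rule Lim_emeasure_decseq)
      show "range (\<lambda>n. A - E n) \<subseteq> sets lebesgue" using fin_measD(1)[OF Af] fin_measD(1)[OF Ef] by auto
      show "decseq (\<lambda>n. A - E n)"
      proof (rule decseq_SucI)
        fix n
        have "1 / real (Suc (Suc n)) \<le> 1 / real (Suc n)" by (simp add: frac_le)
        then show "A - E (Suc n) \<subseteq> A - E n" unfolding E_def by auto
      qed
      show "emeasure lebesgue (A - E n) \<noteq> \<infinity>" for n
        using fin_measD(2)[OF Af] emeasure_mono[of "A - E n" A lebesgue] fin_measD(1)[OF Af]
        by (auto simp: top_unique)
    qed
    moreover have "(\<Inter>n. A - E n) = {}"
    proof safe
      fix x assume x: "x \<in> (\<Inter>n. A - E n)"
      then have "t < f x" by (auto simp: A_def)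
      then obtain n where "inverse (real (Suc n)) < f x - t" using reals_Archimedean by (metis diff_gt_0_iff_gt)
      then have "x \<in> E n" by (auto simp: E_def field_simps)
      then show "x \<in> {}" using x by auto
    qed
    ultimately show ?thesis by (simp only: emeasure_empty)
  qed
  have "emeasure lebesgue N \<le> 0"
    using lim bound by (intro tendsto_le[OF trivial_limit_sequentially lim tendsto_const]) auto
  then have "N \<in> null_sets lebesgue" using Nm by (auto intro: null_setsI)
  then have "AE x in lebesgue. x \<notin> N" by (rule AE_not_in)
  then have sub: "AE x in lebesgue. x \<in> diamond R A \<longrightarrow> x \<in> Y" by eventually_elim (auto simp: N_def)
  have "emeasure lebesgue (diamond R A) = emeasure lebesgue Y"
    using diamond_props(2)[OF R Af] rearrD(2)[OF R f, of t] by (simp add: Y_def A_def)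
  then have "AE x in lebesgue. x \<in> diamond R A \<longleftrightarrow> x \<in> Y"
    using dAm Ym sub fin_measD(2)[OF dA] by (intro ae_subset_eq) auto
  then show ?thesis by eventually_elim (auto simp: Y_def A_def)
qed

lemma rearr_comp:
  fixes R Q :: "('a::euclidean_space \<Rightarrow> real) \<Rightarrow> ('a \<Rightarrow> real)"
  assumes R: "rearrangement R" and Q: "rearrangement Q"
  shows "rearrangement (R \<circ> Q)"
  unfolding rearrangement_def
proof (intro conjI ballI allI impI)
  fix f :: "'a \<Rightarrow> real" assume f: "f \<in> V_fun"
  show "(R \<circ> Q) f \<in> V_fun" using rearrD(1)[OF R rearrD(1)[OF Q f]] by simp
next
  fix f :: "'a \<Rightarrow> real" and t assume f: "f \<in> V_fun"
  show "emeasure lebesgue {x. t < (R \<circ> Q) f x} = emeasure lebesgue {x. t < f x}"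
    using rearrD(2)[OF R rearrD(1)[OF Q f]] rearrD(2)[OF Q f] by simp
next
  fix f g :: "'a \<Rightarrow> real" assume f: "f \<in> V_fun" and g: "g \<in> V_fun" and fg: "AE x in lebesgue. f x \<le> g x"
  show "AE x in lebesgue. (R \<circ> Q) f x \<le> (R \<circ> Q) g x"
    using rearrD(3)[OF R rearrD(1)[OF Q f] rearrD(1)[OF Q g] rearrD(3)[OF Q f g fg]] by simp
qed

lemma rearr_id: "rearrangement id"
  unfolding rearrangement_def by auto

lemma rearr_seqcomp: "(\<And>k. rearrangement (W k)) \<Longrightarrow> rearrangement (seqcomp W k)"
  by (induction k) (auto intro: rearr_comp rearr_id)

lemma diamond_comp:
  assumes R: "rearrangement R" and Q: "rearrangement Q" and A: "A \<in> fin_meas_sets"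
  shows "AE x in lebesgue. x \<in> diamond (R \<circ> Q) A \<longleftrightarrow> x \<in> diamond R (diamond Q A)"
proof -
  note dQ = diamond_props[OF Q A]
  have "AE x in lebesgue. R (Q (indicator A)) x = R (indicator (diamond Q A)) x"
    by (rule rearr_ae_cong[OF R rearrD(1)[OF Q ind_V[OF A]] ind_V[OF dQ(3)] dQ(1)])
  then show ?thesis by eventually_elim (simp add: diamond_def)
qed

lemma diamond_id: "diamond id A = A" "diamond (\<lambda>a. a) A = A"
  unfolding diamond_def by (auto simp: indicator_def)

lemma diamond_seqcomp:
  assumes W: "\<And>k. rearrangement (W k)" and A: "A \<in> fin_meas_sets"
  shows "(AE x in lebesgue. x \<in> diamond (seqcomp W k) A \<longleftrightarrow> x \<in> seqcomp (\<lambda>j. diamond (W j)) k A)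
     \<and> seqcomp (\<lambda>j. diamond (W j)) k A \<in> fin_meas_sets"
proof (induction k)
  case 0
  then show ?case using A by (simp add: diamond_id)
next
  case (Suc k)
  note C = rearr_seqcomp[of W k, OF W]
  have 1: "AE x in lebesgue. x \<in> diamond (W k \<circ> seqcomp W k) A \<longleftrightarrow> x \<in> diamond (W k) (diamond (seqcomp W k) A)"
    by (rule diamond_comp[OF W C A])
  have 2: "AE x in lebesgue. x \<in> diamond (W k) (diamond (seqcomp W k) A) \<longleftrightarrow> x \<in> diamond (W k) (seqcomp (\<lambda>j. diamond (W j)) k A)"
    using Suc.IH by (intro diamond_ae_cong[OF W diamond_props(3)[OF C A]]) auto
  have 3: "seqcomp (\<lambda>j. diamond (W j)) (Suc k) A \<in> fin_meas_sets"
    using diamond_props(3)[OF W] Suc.IH by simp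
  from 1 2 have "AE x in lebesgue. x \<in> diamond (W k \<circ> seqcomp W k) A \<longleftrightarrow> x \<in> diamond (W k) (seqcomp (\<lambda>j. diamond (W j)) k A)"
    by eventually_elim blast
  then show ?case using 3 by (simp only: seqcomp.simps comp_apply o_def)
qed

definition nonexp :: "('a::euclidean_space set \<Rightarrow> 'a set) \<Rightarrow> bool" where
  "nonexp D \<longleftrightarrow> (\<forall>A\<in>fin_meas_sets. D A \<in> fin_meas_sets) \<and>
     (\<forall>A\<in>fin_meas_sets. \<forall>B\<in>fin_meas_sets. ind_dist (D A) (D B) \<le> ind_dist A B)"

lemma nonexp_diamond: "rearrangement R \<Longrightarrow> nonexp (diamond R)"
  unfolding nonexp_def using diamond_props(3) diamond_nonexp by blast

lemma nonexp_id: "nonexp id"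
  unfolding nonexp_def by auto

lemma nonexp_comp: "nonexp D \<Longrightarrow> nonexp E \<Longrightarrow> nonexp (D \<circ> E)"
  unfolding nonexp_def by (metis comp_apply order_trans)

lemma nonexp_seqcomp: "(\<And>k. nonexp (S k)) \<Longrightarrow> nonexp (seqcomp S k)"
  by (induction k) (auto intro: nonexp_comp nonexp_id)

lemma lebesgue_singleton_null: "{a::'a::euclidean_space} \<in> null_sets lebesgue"
  using emeasure_lborel_singleton[of a] by (auto intro: null_setsI simp: emeasure_completion)

lemma compact_fin: "K \<in> compact_sets \<Longrightarrow> K \<in> fin_meas_sets"
  unfolding compact_sets_def fin_meas_sets_def
  using lmeasurable_compact[of K] by (auto simp: fmeasurable_def)

lemma ennreal_add_less:
  assumes "x < ennreal a" "y < ennreal b"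
  shows "x + y < ennreal (a + b)"
proof -
  obtain r where r: "x = ennreal r" "0 \<le> r" using assms(1) by (cases x rule: ennreal_cases) auto
  obtain s where s: "y = ennreal s" "0 \<le> s" using assms(2) by (cases y rule: ennreal_cases) auto
  have "r < a" using assms(1) r by (metis ennreal_less_iff not_less ennreal_le_iff2 ennreal_less_zero_iff less_le_trans)
  moreover have "s < b" using assms(2) s by (metis ennreal_less_iff not_less ennreal_le_iff2 ennreal_less_zero_iff less_le_trans)
  ultimately show ?thesis using r s by (simp flip: ennreal_plus add: ennreal_less_iff)
qed

lemma inner_compact:
  fixes A :: "'a::euclidean_space set"
  assumes A: "A \<in> fin_meas_sets" and e: "e > 0"
  shows "\<exists>K\<in>compact_sets. ind_dist A K < ennreal e"
proof -
  have Am: "A \<in> sets lebesgue" "emeasure lebesgue A < \<infinity>" using fin_measD[OF A] by auto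
  have e2: "e/2 > 0" using e by simp
  obtain T where T: "closed T" "T \<subseteq> A" "A - T \<in> lmeasurable" "emeasure lebesgue (A - T) < ennreal (e/2)"
    by (rule sets_lebesgue_inner_closed[OF Am(1) e2])
  have lim: "(\<lambda>n. emeasure lebesgue (A - cball 0 (real n))) \<longlonglongrightarrow> emeasure lebesgue (\<Inter>n. A - cball (0::'a) (real n))"
  proof (rule Lim_emeasure_decseq)
    show "range (\<lambda>n. A - cball (0::'a) (real n)) \<subseteq> sets lebesgue" using Am by auto
    show "decseq (\<lambda>n. A - cball (0::'a) (real n))"
      by (rule decseq_SucI) (auto simp: mem_cball_0)
    show "emeasure lebesgue (A - cball 0 (real n)) \<noteq> \<infinity>" for n
      using Am emeasure_mono[of "A - cball 0 (real n)" A lebesgue] by (auto simp: top_unique)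
  qed
  have "(\<Inter>n. A - cball (0::'a) (real n)) = {}"
  proof safe
    fix x assume "x \<in> (\<Inter>n. A - cball (0::'a) (real n))"
    moreover obtain n where "norm x \<le> real n" using real_arch_simple by blast
    ultimately show "x \<in> {}" by auto
  qed
  with lim have "(\<lambda>n. emeasure lebesgue (A - cball 0 (real n))) \<longlonglongrightarrow> 0" by (simp only: emeasure_empty)
  then have "eventually (\<lambda>n. emeasure lebesgue (A - cball 0 (real n)) < ennreal (e/2)) sequentially"
    using e by (intro order_tendstoD(2)) auto
  then obtain n where n: "emeasure lebesgue (A - cball 0 (real n)) < ennreal (e/2)"
    by (auto simp: eventually_sequentially)
  define K where "K = insert 0 (T \<inter> cball 0 (real n))"
  have Kc: "K \<in> compact_sets" unfolding K_def compact_sets_def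
    using T(1) by (simp add: closed_Int_compact Int_commute)
  have Km: "K \<in> sets lebesgue" using compact_fin[OF Kc] by (simp add: fin_meas_sets_def)
  have ATm: "A - T \<in> sets lebesgue" using T(3) by (simp add: fmeasurable_def)
  have ACm: "A - cball 0 (real n) \<in> sets lebesgue" using Am by auto
  have Um: "(A - T) \<union> (A - cball 0 (real n)) \<in> sets lebesgue" using ATm ACm by auto
  have Zm: "{0::'a} \<in> sets lebesgue" using lebesgue_singleton_null[of 0] by auto
  have Im: "((A - T) \<union> (A - cball 0 (real n))) \<union> {0} \<in> sets lebesgue" using Um Zm by (rule sets.Un)
  have "ind_dist A K = emeasure lebesgue ((A - K) \<union> (K - A))" by (rule ind_dist_eq[OF Am(1) Km])
  also have "\<dots> \<le> emeasure lebesgue (((A - T) \<union> (A - cball 0 (real n))) \<union> {0})"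
    using T(2) by (intro emeasure_mono[OF _ Im]) (auto simp: K_def)
  also have "\<dots> \<le> emeasure lebesgue ((A - T) \<union> (A - cball 0 (real n))) + emeasure lebesgue {0::'a}"
    by (rule emeasure_subadditive[OF Um Zm])
  also have "\<dots> \<le> emeasure lebesgue (A - T) + emeasure lebesgue (A - cball 0 (real n)) + 0"
    using ATm ACm null_setsD1[OF lebesgue_singleton_null[of "0::'a"]] by (intro add_mono emeasure_subadditive) auto
  also have "\<dots> < ennreal (e/2 + e/2)"
    using ennreal_add_less[OF T(4) n] by simp
  also have "\<dots> = ennreal e" by simp
  finally show ?thesis using Kc by blast
qed

lemma fin_sets: "A \<in> fin_meas_sets \<Longrightarrow> A \<in> sets lebesgue"
  by (simp add: fin_meas_sets_def)

lemma bound3: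
  assumes D: "nonexp D" and Dt: "nonexp Dt" and A: "A \<in> fin_meas_sets" and K: "K \<in> fin_meas_sets"
  shows "ind_dist (D A) (Dt A) \<le> ind_dist A K + ind_dist (D K) (Dt K) + ind_dist A K"
proof -
  have f: "D A \<in> fin_meas_sets" "D K \<in> fin_meas_sets" "Dt A \<in> fin_meas_sets" "Dt K \<in> fin_meas_sets"
    using D Dt A K unfolding nonexp_def by auto
  have "ind_dist (D A) (Dt A) \<le> ind_dist (D A) (D K) + ind_dist (D K) (Dt A)"
    using f by (intro ind_dist_triangle fin_sets)
  also have "ind_dist (D K) (Dt A) \<le> ind_dist (D K) (Dt K) + ind_dist (Dt K) (Dt A)"
    using f by (intro ind_dist_triangle fin_sets)
  also have "ind_dist (D A) (D K) \<le> ind_dist A K" using D A K unfolding nonexp_def by auto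
  also have "ind_dist (Dt K) (Dt A) \<le> ind_dist A K" using Dt A K unfolding nonexp_def
    by (metis ind_dist_sym)
  finally show ?thesis by (simp add: add_mono add.assoc)
qed

lemma cpt_to_fin:
  fixes Dt :: "'a::euclidean_space set \<Rightarrow> 'a set"
  assumes D: "\<And>k. nonexp (D k)" and Dt: "nonexp Dt"
    and conv: "\<forall>K\<in>compact_sets. (\<lambda>k. ind_dist (D k K) (Dt K)) \<longlonglongrightarrow> 0"
  shows "\<forall>A\<in>fin_meas_sets. (\<lambda>k. ind_dist (D k A) (Dt A)) \<longlonglongrightarrow> 0"
proof
  fix A :: "'a set" assume A: "A \<in> fin_meas_sets"
  have ls: "limsup (\<lambda>k. ind_dist (D k A) (Dt A)) \<le> 0 + ennreal e" if e: "e > 0" for e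
  proof -
    obtain K where K: "K \<in> compact_sets" "ind_dist A K < ennreal (e/2)"
      using inner_compact[OF A, of "e/2"] e by auto
    have Kf: "K \<in> fin_meas_sets" using compact_fin[OF K(1)] .
    have "limsup (\<lambda>k. ind_dist (D k A) (Dt A)) \<le> limsup (\<lambda>k. ind_dist A K + ind_dist (D k K) (Dt K) + ind_dist A K)"
      by (intro Limsup_mono always_eventually allI bound3[OF D Dt A Kf])
    also have "\<dots> = ind_dist A K + 0 + ind_dist A K"
      using conv K(1) by (intro lim_imp_Limsup tendsto_add tendsto_const) auto
    also have "\<dots> \<le> ennreal (e/2) + ennreal (e/2)" using K(2) by (simp add: add_mono)
    also have "\<dots> = 0 + ennreal e" using e by (simp flip: ennreal_plus)
    finally show ?thesis .
  qed
  have "limsup (\<lambda>k. ind_dist (D k A) (Dt A)) \<le> 0"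
    by (rule ennreal_le_epsilon) (rule ls)
  then show "(\<lambda>k. ind_dist (D k A) (Dt A)) \<longlonglongrightarrow> 0"
    by (intro tendsto_0_if_Limsup_eq_0_ennreal) simp
qed

lemma weak_cpt_to_fin:
  fixes Dt :: "'a::euclidean_space set \<Rightarrow> 'a set"
  assumes WD: "\<forall>D\<in>\<D>. nonexp D" and Dt: "nonexp Dt"
    and conv: "\<forall>K\<in>compact_sets. \<exists>Tk. (\<forall>k. Tk k \<in> \<D>) \<and> (\<lambda>k. ind_dist (Tk k K) (Dt K)) \<longlonglongrightarrow> 0"
  shows "\<forall>A\<in>fin_meas_sets. \<exists>Tk. (\<forall>k. Tk k \<in> \<D>) \<and> (\<lambda>k. ind_dist (Tk k A) (Dt A)) \<longlonglongrightarrow> 0"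
proof
  fix A :: "'a set" assume A: "A \<in> fin_meas_sets"
  have "\<exists>G\<in>\<D>. ind_dist (G A) (Dt A) < ennreal (3 * inverse (real (Suc j)))" for j
  proof -
    define a where "a = inverse (real (Suc j))"
    have a: "a > 0" by (simp add: a_def)
    obtain K where K: "K \<in> compact_sets" "ind_dist A K < ennreal a"
      using inner_compact[OF A a] by auto
    have Kf: "K \<in> fin_meas_sets" using compact_fin[OF K(1)] .
    obtain Tk where Tk: "\<forall>k. Tk k \<in> \<D>" "(\<lambda>k. ind_dist (Tk k K) (Dt K)) \<longlonglongrightarrow> 0"
      using conv K(1) by blast
    have "eventually (\<lambda>k. ind_dist (Tk k K) (Dt K) < ennreal a) sequentially"
      using a by (intro order_tendstoD(2)[OF Tk(2)]) auto
    then obtain k where k: "ind_dist (Tk k K) (Dt K) < ennreal a" by (auto simp: eventually_sequentially)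
    have "ind_dist (Tk k A) (Dt A) \<le> ind_dist A K + ind_dist (Tk k K) (Dt K) + ind_dist A K"
      using WD Tk(1) by (intro bound3[OF _ Dt A Kf]) auto
    also have "\<dots> < ennreal (a + a + a)"
      by (intro ennreal_add_less K(2) k)
    also have "a + a + a = 3 * inverse (real (Suc j))" by (simp add: a_def)
    finally show ?thesis using Tk(1) by blast
  qed
  then obtain G where G: "\<And>j. G j \<in> \<D>" "\<And>j. ind_dist (G j A) (Dt A) < ennreal (3 * inverse (real (Suc j)))"
    by metis
  have lim: "(\<lambda>j. ennreal (3 * inverse (real (Suc j)))) \<longlonglongrightarrow> 0"
  proof -
    have "(\<lambda>j. 3 * inverse (real (Suc j))) \<longlonglongrightarrow> 3 * 0"
      by (intro tendsto_mult tendsto_const LIMSEQ_inverse_real_of_nat)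
    then show ?thesis by (subst ennreal_tendsto_0_iff) auto
  qed
  have "(\<lambda>j. ind_dist (G j A) (Dt A)) \<longlonglongrightarrow> 0"
    by (rule tendsto_sandwich[OF _ _ tendsto_const lim]) (simp_all add: less_imp_le[OF G(2)] del: of_nat_Suc)
  then show "\<exists>Tk. (\<forall>k. Tk k \<in> \<D>) \<and> (\<lambda>k. ind_dist (Tk k A) (Dt A)) \<longlonglongrightarrow> 0"
    using G(1) by blast
qed

lemma test_meas1:
  fixes a b :: "'a::euclidean_space \<Rightarrow> real"
  assumes [measurable]: "a \<in> borel_measurable lebesgue" "b \<in> borel_measurable lebesgue"
  shows "(\<lambda>(x, t). indicator {x. (t < a x powr p) \<noteq> (t < b x powr p)} x :: ennreal) \<in> borel_measurable (lebesgue \<Otimes>\<^sub>M lborel)"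
  by measurable

lemma test_meas2:
  fixes a b :: "'a::euclidean_space \<Rightarrow> real"
  assumes [measurable]: "a \<in> borel_measurable lebesgue" "b \<in> borel_measurable lebesgue"
  shows "(\<lambda>t. \<integral>\<^sup>+x. indicator {x. (t < a x powr p) \<noteq> (t < b x powr p)} x \<partial>(lebesgue::'a measure)) \<in> borel_measurable lborel"
  by measurable

lemma xor_set: "{t::real. (t < \<alpha>) \<noteq> (t < \<beta>)} = {min \<alpha> \<beta> ..< max \<alpha> \<beta>}" by auto

lemma xor_meas: "emeasure lborel {t::real. (t < \<alpha>) \<noteq> (t < \<beta>)} = ennreal \<bar>\<alpha> - \<beta>\<bar>"
proof -
  have "{t::real. (t < \<alpha>) \<noteq> (t < \<beta>)} = {min \<alpha> \<beta> ..< max \<alpha> \<beta>}" by auto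
  then show ?thesis by (simp add: max_def min_def)
qed

lemma superadd_powr:
  fixes u v p :: real
  assumes "0 \<le> u" "0 \<le> v" "1 \<le> p"
  shows "u powr p + v powr p \<le> (u + v) powr p"
proof (cases "u + v = 0")
  case True
  then have "u = 0" "v = 0" using assms by auto
  then show ?thesis by simp
next
  case False
  define s where "s = u + v"
  have s: "s > 0" using False assms by (simp add: s_def)
  have key: "w powr p \<le> s powr p * (w / s)" if w: "0 \<le> w" "w \<le> s" for w
  proof -
    have "w powr p = (s * (w / s)) powr p" using s by simp
    also have "\<dots> = s powr p * (w / s) powr p" using powr_mult[of s "w/s" p] s w by simp
    also have "(w / s) powr p \<le> (w / s) powr 1"
      using w s assms(3) by (intro powr_mono') auto
    then have "s powr p * (w / s) powr p \<le> s powr p * (w / s)"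
      using w s by (intro mult_left_mono) auto
    finally show ?thesis .
  qed
  have "u powr p + v powr p \<le> s powr p * (u / s) + s powr p * (v / s)"
    using key[of u] key[of v] assms by (auto simp: s_def intro: add_mono)
  also have "\<dots> = s powr p * ((u + v) / s)" by (simp add: add_divide_distrib ring_distribs)
  also have "\<dots> = s powr p" using s unfolding s_def[symmetric] by simp
  finally show ?thesis by (simp add: s_def)
qed

lemma pow_diff_le:
  fixes a b p :: real
  assumes "0 \<le> a" "0 \<le> b" "1 \<le> p"
  shows "\<bar>a - b\<bar> powr p \<le> \<bar>a powr p - b powr p\<bar>"
proof -
  have *: "(x - y) powr p \<le> x powr p - y powr p" if "0 \<le> y" "y \<le> x" for x y :: real
    using superadd_powr[of "x - y" y p] that assms(3) by simp
  show ?thesis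
  proof (cases "b \<le> a")
    case True
    then have "b powr p \<le> a powr p" using assms by (intro powr_mono2) auto
    then show ?thesis using *[of b a] True assms by simp
  next
    case False
    then have "a powr p \<le> b powr p" using assms by (intro powr_mono2) auto
    then show ?thesis using *[of a b] False assms by simp
  qed
qed

lemma powr_level:
  fixes t y p :: real
  assumes "0 < t" "0 \<le> y" "0 < p"
  shows "t < y powr p \<longleftrightarrow> t powr (1/p) < y"
proof
  assume h: "t < y powr p"
  show "t powr (1/p) < y"
  proof (rule ccontr)
    assume "\<not> t powr (1 / p) < y"
    then have "y powr p \<le> (t powr (1/p)) powr p" using assms by (intro powr_mono2) auto
    also have "\<dots> = t" using assms by (simp add: powr_powr)
    finally show False using h by simp
  qed
next
  assume h: "t powr (1/p) < y"
  have "t = (t powr (1/p)) powr p" using assms by (simp add: powr_powr)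
  also have "\<dots> < y powr p" using h assms by (intro powr_less_mono2) auto
  finally show "t < y powr p" .
qed

lemma Lp_bound_fubini:
  fixes a b :: "'a::euclidean_space \<Rightarrow> real"
  assumes [measurable]: "a \<in> borel_measurable lebesgue" "b \<in> borel_measurable lebesgue"
    and nn: "\<And>x. 0 \<le> a x" "\<And>x. 0 \<le> b x" and p: "1 \<le> p"
  shows "Lp_dist_pow p a b \<le> (\<integral>\<^sup>+t. (\<integral>\<^sup>+x. indicator {x. (t < a x powr p) \<noteq> (t < b x powr p)} x \<partial>lebesgue) \<partial>lborel)"
proof -
  have "Lp_dist_pow p a b \<le> (\<integral>\<^sup>+x. (\<integral>\<^sup>+t. indicator {x. (t < a x powr p) \<noteq> (t < b x powr p)} x \<partial>lborel) \<partial>lebesgue)"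
    unfolding Lp_dist_pow_def
  proof (intro nn_integral_mono)
    fix x
    have "(\<integral>\<^sup>+t. indicator {x. (t < a x powr p) \<noteq> (t < b x powr p)} x \<partial>lborel)
        = (\<integral>\<^sup>+t. indicator {t. (t < a x powr p) \<noteq> (t < b x powr p)} t \<partial>lborel)"
      by (intro nn_integral_cong) (simp add: indicator_def)
    also have "\<dots> = ennreal \<bar>a x powr p - b x powr p\<bar>"
      unfolding xor_set by (subst nn_integral_indicator) (auto simp: max_def min_def)
    finally show "ennreal (\<bar>a x - b x\<bar> powr p) \<le> (\<integral>\<^sup>+t. indicator {x. (t < a x powr p) \<noteq> (t < b x powr p)} x \<partial>lborel)"
      using pow_diff_le[OF nn(1)[of x] nn(2)[of x] p] by (simp add: ennreal_leI)
  qed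
  also have "\<dots> = (\<integral>\<^sup>+t. (\<integral>\<^sup>+x. indicator {x. (t < a x powr p) \<noteq> (t < b x powr p)} x \<partial>lebesgue) \<partial>lborel)"
    by (rule lebborel.Fubini'[symmetric]) measurable
  finally show ?thesis .
qed

lemma inner_eq:
  fixes a b :: "'a::euclidean_space \<Rightarrow> real"
  assumes t: "0 < t" and p: "0 < p" and nn: "\<And>x. 0 \<le> a x" "\<And>x. 0 \<le> b x"
  shows "(\<integral>\<^sup>+x. indicator {x. (t < a x powr p) \<noteq> (t < b x powr p)} x \<partial>lebesgue)
       = ind_dist {x. t powr (1/p) < a x} {x. t powr (1/p) < b x}"
  unfolding ind_dist_def
proof (intro nn_integral_cong)
  fix x
  have "(t < a x powr p) = (t powr (1/p) < a x)" "(t < b x powr p) = (t powr (1/p) < b x)"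
    using powr_level[OF t nn(1)[of x] p] powr_level[OF t nn(2)[of x] p] by auto
  then show "indicator {x. (t < a x powr p) \<noteq> (t < b x powr p)} x =
    ennreal \<bar>indicator {x. t powr (1 / p) < a x} x - indicator {x. t powr (1 / p) < b x} x :: real\<bar>"
    by (auto simp: indicator_def)
qed

lemma level_pow_meas:
  fixes a :: "'a::euclidean_space \<Rightarrow> real"
  assumes [measurable]: "a \<in> borel_measurable lebesgue"
  shows "{x. t < a x powr p} \<in> sets lebesgue"
proof -
  have "{x \<in> space lebesgue. t < a x powr p} \<in> sets lebesgue" by measurable
  then show ?thesis by simp
qed

lemma inner_bound:
  fixes a b :: "'a::euclidean_space \<Rightarrow> real"
  assumes [measurable]: "a \<in> borel_measurable lebesgue" "b \<in> borel_measurable lebesgue"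
  shows "(\<integral>\<^sup>+x. indicator {x. (t < a x powr p) \<noteq> (t < b x powr p)} x \<partial>lebesgue)
     \<le> emeasure lebesgue {x. t < a x powr p} + emeasure lebesgue {x. t < b x powr p}"
proof -
  have "(\<integral>\<^sup>+x. indicator {x. (t < a x powr p) \<noteq> (t < b x powr p)} x \<partial>lebesgue)
     \<le> (\<integral>\<^sup>+x. indicator {x. t < a x powr p} x + indicator {x. t < b x powr p} x \<partial>lebesgue)"
    by (intro nn_integral_mono) (auto simp: indicator_def)
  also have "\<dots> = emeasure lebesgue {x. t < a x powr p} + emeasure lebesgue {x. t < b x powr p}"
    using level_pow_meas[of a t p] level_pow_meas[of b t p]
    by (subst nn_integral_add) (auto simp: nn_integral_indicator)
  finally show ?thesis .
qed

lemma layer: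
  fixes f :: "'a::euclidean_space \<Rightarrow> real"
  assumes [measurable]: "f \<in> borel_measurable lebesgue" and nn: "\<And>x. 0 \<le> f x"
  shows "(\<integral>\<^sup>+t. (\<integral>\<^sup>+x. indicator {x. t < f x powr p} x \<partial>lebesgue) * indicator {0<..} t \<partial>lborel)
     = (\<integral>\<^sup>+x. ennreal (f x powr p) \<partial>lebesgue)"
proof -
  have "(\<integral>\<^sup>+t. (\<integral>\<^sup>+x. indicator {x. t < f x powr p} x \<partial>lebesgue) * indicator {0<..} t \<partial>lborel)
      = (\<integral>\<^sup>+t. (\<integral>\<^sup>+x. indicator {x. t < f x powr p} x * indicator {0<..} t \<partial>lebesgue) \<partial>lborel)"
    by (intro nn_integral_cong nn_integral_multc[symmetric]) measurable
  also have "\<dots> = (\<integral>\<^sup>+x. (\<integral>\<^sup>+t. indicator {x. t < f x powr p} x * indicator {0<..} t \<partial>lborel) \<partial>lebesgue)"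
    by (rule lebborel.Fubini') measurable
  also have "\<dots> = (\<integral>\<^sup>+x. ennreal (f x powr p) \<partial>lebesgue)"
  proof (intro nn_integral_cong)
    fix x
    have "(\<integral>\<^sup>+t. indicator {x. t < f x powr p} x * indicator {0<..} t \<partial>lborel)
        = (\<integral>\<^sup>+t. indicator {0<..<f x powr p} t \<partial>lborel)"
      by (intro nn_integral_cong) (auto simp: indicator_def)
    also have "\<dots> = ennreal (f x powr p)" by simp
    finally show "(\<integral>\<^sup>+t. indicator {x. t < f x powr p} x * indicator {0<..} t \<partial>lborel) = ennreal (f x powr p)" .
  qed
  finally show ?thesis .
qed

lemma Lp_V:
  assumes p: "0 < p" and f: "f \<in> Lp_plus p"
  shows "f \<in> V_fun"
proof -
  have fm[measurable]: "f \<in> borel_measurable lebesgue" and nn: "\<And>x. 0 \<le> f x"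
    and fin: "(\<integral>\<^sup>+ x. ennreal (\<bar>f x\<bar> powr p) \<partial>lebesgue) < \<infinity>"
    using f by (auto simp: Lp_plus_def)
  have "emeasure lebesgue {x. t < f x} < \<infinity>" if t: "t > 0" for t
  proof -
    have m: "{x. t < f x} \<in> sets lebesgue" using leb_level[OF fm] .
    have "ennreal (t powr p) * emeasure lebesgue {x. t < f x} = (\<integral>\<^sup>+x. ennreal (t powr p) * indicator {x. t < f x} x \<partial>lebesgue)"
      using m by (simp add: nn_integral_cmult_indicator)
    also have "\<dots> \<le> (\<integral>\<^sup>+ x. ennreal (\<bar>f x\<bar> powr p) \<partial>lebesgue)"
    proof (intro nn_integral_mono)
      fix x show "ennreal (t powr p) * indicator {x. t < f x} x \<le> ennreal (\<bar>f x\<bar> powr p)"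
        using t nn[of x] p by (auto simp: indicator_def intro!: ennreal_leI powr_mono2)
    qed
    finally have "ennreal (t powr p) * emeasure lebesgue {x. t < f x} < \<infinity>" using fin by (rule le_less_trans)
    moreover have "ennreal (t powr p) > 0" using t by simp
    ultimately show ?thesis
      by (auto simp: ennreal_mult_less_top)
  qed
  then show ?thesis using nn unfolding V_fun_def by auto
qed

lemma key1:
  assumes R: "rearrangement R" and T: "rearrangement T" and A: "A \<in> fin_meas_sets" and p: "0 < p"
  shows "Lp_dist_pow p (R (indicator A)) (T (indicator A)) = ind_dist (diamond R A) (diamond T A)"
  unfolding Lp_dist_pow_def ind_dist_def
  using diamond_props(1)[OF R A] diamond_props(1)[OF T A]
proof (intro nn_integral_cong_AE, eventually_elim)
  case (elim x)
  then show ?case using p by (auto simp: indicator_def)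
qed

lemma key2:
  fixes f :: "'a::euclidean_space \<Rightarrow> real"
  assumes R: "\<And>k. rearrangement (R k)" and T: "rearrangement T" and p: "1 \<le> p"
    and f: "f \<in> Lp_plus p"
    and conv: "\<forall>A\<in>fin_meas_sets. (\<lambda>k. ind_dist (diamond (R k) A) (diamond T A)) \<longlonglongrightarrow> 0"
  shows "(\<lambda>k. Lp_dist_pow p (R k f) (T f)) \<longlonglongrightarrow> 0"
proof -
  have p0: "0 < p" using p by simp
  have fV: "f \<in> V_fun" using Lp_V[OF p0 f] .
  have fm[measurable]: "f \<in> borel_measurable lebesgue" and fnn: "\<And>x. 0 \<le> f x"
    and fin: "(\<integral>\<^sup>+ x. ennreal (\<bar>f x\<bar> powr p) \<partial>lebesgue) < \<infinity>"
    using f by (auto simp: Lp_plus_def)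
  have RV: "R k f \<in> V_fun" for k using rearrD(1)[OF R fV] .
  have TV: "T f \<in> V_fun" using rearrD(1)[OF T fV] .
  have Rm[measurable]: "R k f \<in> borel_measurable lebesgue" for k using V_funD(1)[OF RV] .
  have Tm[measurable]: "T f \<in> borel_measurable lebesgue" using V_funD(1)[OF TV] .
  have Rnn: "\<And>k x. 0 \<le> R k f x" using V_funD(2)[OF RV] .
  have Tnn: "\<And>x. 0 \<le> T f x" using V_funD(2)[OF TV] .
  define G where "G k t = (\<integral>\<^sup>+x. indicator {x. (t < R k f x powr p) \<noteq> (t < T f x powr p)} x \<partial>lebesgue)" for k t
  define w where "w t = 2 * ((\<integral>\<^sup>+x. indicator {x. t < f x powr p} x \<partial>lebesgue) * indicator {0<..} t)" for t
  have Gm[measurable]: "G k \<in> borel_measurable lborel" for k unfolding G_def by measurable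
  have wm[measurable]: "w \<in> borel_measurable lborel" unfolding w_def by measurable
  have Gneg: "G k t = 0" if "t < 0" for k t
  proof -
    have "{x. (t < R k f x powr p) \<noteq> (t < T f x powr p)} = {}"
      using that by (auto intro: less_le_trans[OF _ powr_ge_zero])
    then show ?thesis unfolding G_def by simp
  qed
  have levpow: "emeasure lebesgue {x. t < g x powr p} = emeasure lebesgue {x. t powr (1/p) < g x}"
    if "t > 0" "\<And>x. 0 \<le> g x" for t and g :: "'a \<Rightarrow> real"
    using powr_level[OF that(1) that(2) p0] by simp
  have bound: "AE t in lborel. G k t \<le> w t" for k
    using AE_lborel_singleton[of 0]
  proof eventually_elim
    case (elim t)
    show ?case
    proof (cases "t > 0")
      case True
      have "G k t \<le> emeasure lebesgue {x. t < R k f x powr p} + emeasure lebesgue {x. t < T f x powr p}"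
        unfolding G_def by (rule inner_bound) measurable
      also have "emeasure lebesgue {x. t < R k f x powr p} = emeasure lebesgue {x. t < f x powr p}"
        using True levpow[of t "R k f"] levpow[of t f] Rnn fnn rearrD(2)[OF R fV] by simp
      also have "emeasure lebesgue {x. t < T f x powr p} = emeasure lebesgue {x. t < f x powr p}"
        using True levpow[of t "T f"] levpow[of t f] Tnn fnn rearrD(2)[OF T fV] by simp
      also have "emeasure lebesgue {x. t < f x powr p} + emeasure lebesgue {x. t < f x powr p} = w t"
        unfolding w_def using True level_pow_meas[OF fm, of t p]
        by (simp add: nn_integral_indicator mult_2)
      finally show ?thesis .
    next
      case False
      then have "t < 0" using elim by auto
      then show ?thesis using Gneg by simp
    qed
  qed
  have wfin: "(\<integral>\<^sup>+t. w t \<partial>lborel) < \<infinity>"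
  proof -
    have "(\<integral>\<^sup>+t. w t \<partial>lborel) = 2 * (\<integral>\<^sup>+t. (\<integral>\<^sup>+x. indicator {x. t < f x powr p} x \<partial>lebesgue) * indicator {0<..} t \<partial>lborel)"
      unfolding w_def by (rule nn_integral_cmult) measurable
    also have "\<dots> = 2 * (\<integral>\<^sup>+x. ennreal (f x powr p) \<partial>lebesgue)"
      by (simp add: layer[OF fm fnn])
    also have "(\<integral>\<^sup>+x. ennreal (f x powr p) \<partial>lebesgue) = (\<integral>\<^sup>+ x. ennreal (\<bar>f x\<bar> powr p) \<partial>lebesgue)"
      using fnn by (simp add: abs_of_nonneg)
    finally show ?thesis using fin by (simp add: ennreal_mult_less_top)
  qed
  have ptw: "AE t in lborel. (\<lambda>k. G k t) \<longlonglongrightarrow> 0"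
    using AE_lborel_singleton[of 0]
  proof eventually_elim
    case (elim t)
    show ?case
    proof (cases "t > 0")
      case True
      define s where "s = t powr (1/p)"
      have s: "s > 0" using True by (simp add: s_def)
      have "G k t = ind_dist (diamond (R k) {x. s < f x}) (diamond T {x. s < f x})" for k
      proof -
        have "G k t = ind_dist {x. s < R k f x} {x. s < T f x}"
          unfolding G_def s_def using inner_eq[OF True p0 Rnn Tnn] by simp
        also have "\<dots> = ind_dist (diamond (R k) {x. s < f x}) (diamond T {x. s < f x})"
          using level_commute[OF R fV s] level_commute[OF T fV s] by (intro ind_dist_ae_cong) simp_all
        finally show ?thesis .
      qed
      then show ?thesis using conv level_fin[OF fV s] by simp
    next
      case False
      then have "t < 0" using elim by auto
      then show ?thesis using Gneg by simp
    qed
  qed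
  have "(\<lambda>k. \<integral>\<^sup>+t. G k t \<partial>lborel) \<longlonglongrightarrow> (\<integral>\<^sup>+t. 0 \<partial>lborel)"
    using nn_integral_dominated_convergence[of G lborel "\<lambda>_. 0" w] Gm wm bound wfin ptw by simp
  then have lim: "(\<lambda>k. \<integral>\<^sup>+t. G k t \<partial>lborel) \<longlonglongrightarrow> 0" by simp
  have le: "Lp_dist_pow p (R k f) (T f) \<le> (\<integral>\<^sup>+t. G k t \<partial>lborel)" for k
    unfolding G_def by (rule Lp_bound_fubini[OF Rm Tm Rnn Tnn p])
  show ?thesis
    by (rule tendsto_sandwich[OF _ _ tendsto_const lim]) (simp_all add: le)
qed

lemma ind_Lp:
  assumes A: "A \<in> fin_meas_sets" and p: "0 < p"
  shows "indicator A \<in> Lp_plus p"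
proof -
  have Am: "A \<in> sets lebesgue" "emeasure lebesgue A < \<infinity>" using fin_measD[OF A] by auto
  have "(\<integral>\<^sup>+ x. ennreal (\<bar>indicator A x :: real\<bar> powr p) \<partial>lebesgue) = (\<integral>\<^sup>+ x. indicator A x \<partial>lebesgue)"
    using p by (intro nn_integral_cong) (auto simp: indicator_def)
  also have "\<dots> = emeasure lebesgue A" using Am by simp
  finally show ?thesis using Am unfolding Lp_plus_def by (auto simp: indicator_def)
qed

lemma Lp_to_set:
  fixes T :: "('a::euclidean_space \<Rightarrow> real) \<Rightarrow> ('a \<Rightarrow> real)"
  assumes T: "rearrangement T" and R: "\<And>k. rearrangement (R k)" and p: "0 < p"
    and conv: "\<forall>f\<in>Lp_plus p. (\<lambda>k. Lp_dist_pow p (R k f) (T f)) \<longlonglongrightarrow> 0"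
  shows "\<forall>A\<in>fin_meas_sets. (\<lambda>k. ind_dist (diamond (R k) A) (diamond T A)) \<longlonglongrightarrow> 0"
proof
  fix A :: "'a set" assume A: "A \<in> fin_meas_sets"
  have "(\<lambda>k. Lp_dist_pow p (R k (indicator A)) (T (indicator A))) \<longlonglongrightarrow> 0"
    using conv ind_Lp[OF A p] by blast
  then show "(\<lambda>k. ind_dist (diamond (R k) A) (diamond T A)) \<longlonglongrightarrow> 0"
    using key1[OF R T A p] by simp
qed

lemma seq_set_eq:
  assumes W: "\<And>k. rearrangement (S k)" and T: "rearrangement T" and A: "A \<in> fin_meas_sets"
  shows "ind_dist (seqcomp (\<lambda>j. diamond (S j)) k A) (diamond T A) = ind_dist (diamond (seqcomp S k) A) (diamond T A)"
  using diamond_seqcomp[of S A k, OF W A] by (intro ind_dist_ae_cong) auto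

theorem theorem5p2:
  fixes p :: real
    and T :: "('a::euclidean_space \<Rightarrow> real) \<Rightarrow> ('a \<Rightarrow> real)"
    and \<W> :: "(('a \<Rightarrow> real) \<Rightarrow> ('a \<Rightarrow> real)) set"
  assumes "1 \<le> p"
    and "rearrangement T"
    and "\<forall>W\<in>\<W>. rearrangement W"
  shows "(approximable (Lp_dist_pow p) (Lp_plus p) \<W> T
            \<longleftrightarrow> approximable ind_dist fin_meas_sets (diamond ` \<W>) (diamond T))
       \<and> (approximable ind_dist fin_meas_sets (diamond ` \<W>) (diamond T)
            \<longleftrightarrow> approximable ind_dist compact_sets (diamond ` \<W>) (diamond T))
       \<and> (seq_approximable (Lp_dist_pow p) (Lp_plus p) \<W> T
            \<longleftrightarrow> seq_approximable ind_dist fin_meas_sets (diamond ` \<W>) (diamond T))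
       \<and> (seq_approximable ind_dist fin_meas_sets (diamond ` \<W>) (diamond T)
            \<longleftrightarrow> seq_approximable ind_dist compact_sets (diamond ` \<W>) (diamond T))
       \<and> (weakly_approximable (Lp_dist_pow p) (Lp_plus p) \<W> T
            \<longrightarrow> weakly_approximable ind_dist fin_meas_sets (diamond ` \<W>) (diamond T))
       \<and> (weakly_approximable ind_dist fin_meas_sets (diamond ` \<W>) (diamond T)
            \<longleftrightarrow> weakly_approximable ind_dist compact_sets (diamond ` \<W>) (diamond T))"
proof -
  note p = assms(1) and T = assms(2) and Wr = assms(3)
  have p0: "0 < p" using p by simp
  have cf: "compact_sets \<subseteq> (fin_meas_sets :: 'a set set)" using compact_fin by blast
  have nT: "nonexp (diamond T)" by (rule nonexp_diamond[OF T])
  have nW: "\<forall>D\<in>diamond ` \<W>. nonexp D" using Wr nonexp_diamond by blast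
  have pick: "\<exists>S. (\<forall>k. S k \<in> \<W>) \<and> D = (\<lambda>k. diamond (S k))" if "\<forall>k. D k \<in> diamond ` \<W>" for D
  proof -
    have "\<forall>k. \<exists>W. W \<in> \<W> \<and> D k = diamond W" using that by blast
    then obtain S where "\<forall>k. S k \<in> \<W> \<and> D k = diamond (S k)" by metis
    then show ?thesis by (intro exI[of _ S]) auto
  qed
  have A1: "approximable (Lp_dist_pow p) (Lp_plus p) \<W> T
            \<longleftrightarrow> approximable ind_dist fin_meas_sets (diamond ` \<W>) (diamond T)"
  proof
    assume "approximable (Lp_dist_pow p) (Lp_plus p) \<W> T"
    then obtain Tk where Tk: "\<forall>k. Tk k \<in> \<W>" "\<forall>f\<in>Lp_plus p. (\<lambda>k. Lp_dist_pow p (Tk k f) (T f)) \<longlonglongrightarrow> 0"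
      unfolding approximable_def by blast
    have R: "\<And>k. rearrangement (Tk k)" using Tk(1) Wr by blast
    show "approximable ind_dist fin_meas_sets (diamond ` \<W>) (diamond T)"
      unfolding approximable_def using Tk(1) Lp_to_set[OF T R p0 Tk(2)]
      by (intro exI[of _ "\<lambda>k. diamond (Tk k)"]) auto
  next
    assume "approximable ind_dist fin_meas_sets (diamond ` \<W>) (diamond T)"
    then obtain Dk where Dk: "\<forall>k. Dk k \<in> diamond ` \<W>" "\<forall>A\<in>fin_meas_sets. (\<lambda>k. ind_dist (Dk k A) (diamond T A)) \<longlonglongrightarrow> 0"
      unfolding approximable_def by blast
    obtain S where S: "\<forall>k. S k \<in> \<W>" "Dk = (\<lambda>k. diamond (S k))" using pick[OF Dk(1)] by blast
    have R: "\<And>k. rearrangement (S k)" using S(1) Wr by blast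
    show "approximable (Lp_dist_pow p) (Lp_plus p) \<W> T"
      unfolding approximable_def using S(1) key2[OF R T p _ ] Dk(2) unfolding S(2)
      by (intro exI[of _ S]) auto
  qed
  have A2: "approximable ind_dist fin_meas_sets (diamond ` \<W>) (diamond T)
            \<longleftrightarrow> approximable ind_dist compact_sets (diamond ` \<W>) (diamond T)"
  proof
    assume "approximable ind_dist fin_meas_sets (diamond ` \<W>) (diamond T)"
    then show "approximable ind_dist compact_sets (diamond ` \<W>) (diamond T)"
      unfolding approximable_def using cf by blast
  next
    assume "approximable ind_dist compact_sets (diamond ` \<W>) (diamond T)"
    then obtain Dk where Dk: "\<forall>k. Dk k \<in> diamond ` \<W>" "\<forall>K\<in>compact_sets. (\<lambda>k. ind_dist (Dk k K) (diamond T K)) \<longlonglongrightarrow> 0"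
      unfolding approximable_def by blast
    have "\<And>k. nonexp (Dk k)" using Dk(1) nW by blast
    then show "approximable ind_dist fin_meas_sets (diamond ` \<W>) (diamond T)"
      unfolding approximable_def using Dk(1) cpt_to_fin[OF _ nT Dk(2)] by blast
  qed
  have A3: "seq_approximable (Lp_dist_pow p) (Lp_plus p) \<W> T
            \<longleftrightarrow> seq_approximable ind_dist fin_meas_sets (diamond ` \<W>) (diamond T)"
  proof
    assume "seq_approximable (Lp_dist_pow p) (Lp_plus p) \<W> T"
    then obtain S where S: "\<forall>k. S k \<in> \<W>" "\<forall>f\<in>Lp_plus p. (\<lambda>k. Lp_dist_pow p (seqcomp S (Suc k) f) (T f)) \<longlonglongrightarrow> 0"
      unfolding seq_approximable_def by blast
    have R: "\<And>k. rearrangement (S k)" using S(1) Wr by blast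
    have RR: "\<And>k. rearrangement (seqcomp S (Suc k))" using rearr_seqcomp[OF R] .
    have "\<forall>A\<in>fin_meas_sets. (\<lambda>k. ind_dist (diamond (seqcomp S (Suc k)) A) (diamond T A)) \<longlonglongrightarrow> 0"
      by (rule Lp_to_set[OF T RR p0 S(2)])
    then have "\<forall>A\<in>fin_meas_sets. (\<lambda>k. ind_dist (seqcomp (\<lambda>j. diamond (S j)) (Suc k) A) (diamond T A)) \<longlonglongrightarrow> 0"
      by (simp only: seq_set_eq[OF R T] cong: ball_cong) simp
    then show "seq_approximable ind_dist fin_meas_sets (diamond ` \<W>) (diamond T)"
      unfolding seq_approximable_def using S(1) by (intro exI[of _ "\<lambda>j. diamond (S j)"]) auto
  next
    assume "seq_approximable ind_dist fin_meas_sets (diamond ` \<W>) (diamond T)"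
    then obtain Dk where Dk: "\<forall>k. Dk k \<in> diamond ` \<W>" "\<forall>A\<in>fin_meas_sets. (\<lambda>k. ind_dist (seqcomp Dk (Suc k) A) (diamond T A)) \<longlonglongrightarrow> 0"
      unfolding seq_approximable_def by blast
    obtain S where S: "\<forall>k. S k \<in> \<W>" "Dk = (\<lambda>k. diamond (S k))" using pick[OF Dk(1)] by blast
    have R: "\<And>k. rearrangement (S k)" using S(1) Wr by blast
    have RR: "\<And>k. rearrangement (seqcomp S (Suc k))" using rearr_seqcomp[OF R] .
    have "\<forall>A\<in>fin_meas_sets. (\<lambda>k. ind_dist (diamond (seqcomp S (Suc k)) A) (diamond T A)) \<longlonglongrightarrow> 0"
      using Dk(2) unfolding S(2) by (simp only: seq_set_eq[OF R T] cong: ball_cong) simp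
    then have "\<forall>f\<in>Lp_plus p. (\<lambda>k. Lp_dist_pow p (seqcomp S (Suc k) f) (T f)) \<longlonglongrightarrow> 0"
      using key2[where R="\<lambda>k. seqcomp S (Suc k)", OF RR T p] by blast
    then show "seq_approximable (Lp_dist_pow p) (Lp_plus p) \<W> T"
      unfolding seq_approximable_def using S(1) by blast
  qed
  have A4: "seq_approximable ind_dist fin_meas_sets (diamond ` \<W>) (diamond T)
            \<longleftrightarrow> seq_approximable ind_dist compact_sets (diamond ` \<W>) (diamond T)"
  proof
    assume "seq_approximable ind_dist fin_meas_sets (diamond ` \<W>) (diamond T)"
    then show "seq_approximable ind_dist compact_sets (diamond ` \<W>) (diamond T)"
      unfolding seq_approximable_def using cf by blast
  next
    assume "seq_approximable ind_dist compact_sets (diamond ` \<W>) (diamond T)"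
    then obtain Dk where Dk: "\<forall>k. Dk k \<in> diamond ` \<W>" "\<forall>K\<in>compact_sets. (\<lambda>k. ind_dist (seqcomp Dk (Suc k) K) (diamond T K)) \<longlonglongrightarrow> 0"
      unfolding seq_approximable_def by blast
    have "\<And>k. nonexp (Dk k)" using Dk(1) nW by blast
    then have "\<And>k. nonexp (seqcomp Dk (Suc k))" by (rule nonexp_seqcomp)
    then show "seq_approximable ind_dist fin_meas_sets (diamond ` \<W>) (diamond T)"
      unfolding seq_approximable_def using Dk(1) cpt_to_fin[OF _ nT Dk(2)] by blast
  qed
  have A5: "weakly_approximable (Lp_dist_pow p) (Lp_plus p) \<W> T
            \<longrightarrow> weakly_approximable ind_dist fin_meas_sets (diamond ` \<W>) (diamond T)"
  proof
    assume H: "weakly_approximable (Lp_dist_pow p) (Lp_plus p) \<W> T"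
    show "weakly_approximable ind_dist fin_meas_sets (diamond ` \<W>) (diamond T)"
      unfolding weakly_approximable_def
    proof
      fix A :: "'a set" assume A: "A \<in> fin_meas_sets"
      obtain Tk where Tk: "\<forall>k. Tk k \<in> \<W>" "(\<lambda>k. Lp_dist_pow p (Tk k (indicator A)) (T (indicator A))) \<longlonglongrightarrow> 0"
        using H ind_Lp[OF A p0] unfolding weakly_approximable_def by blast
      have R: "\<And>k. rearrangement (Tk k)" using Tk(1) Wr by blast
      have "(\<lambda>k. ind_dist (diamond (Tk k) A) (diamond T A)) \<longlonglongrightarrow> 0"
        using Tk(2) key1[OF R T A p0] by simp
      then show "\<exists>Dk. (\<forall>k. Dk k \<in> diamond ` \<W>) \<and> (\<lambda>k. ind_dist (Dk k A) (diamond T A)) \<longlonglongrightarrow> 0"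
        using Tk(1) by (intro exI[of _ "\<lambda>k. diamond (Tk k)"]) auto
    qed
  qed
  have A6: "weakly_approximable ind_dist fin_meas_sets (diamond ` \<W>) (diamond T)
            \<longleftrightarrow> weakly_approximable ind_dist compact_sets (diamond ` \<W>) (diamond T)"
  proof
    assume "weakly_approximable ind_dist fin_meas_sets (diamond ` \<W>) (diamond T)"
    then show "weakly_approximable ind_dist compact_sets (diamond ` \<W>) (diamond T)"
      unfolding weakly_approximable_def using cf by blast
  next
    assume "weakly_approximable ind_dist compact_sets (diamond ` \<W>) (diamond T)"
    then show "weakly_approximable ind_dist fin_meas_sets (diamond ` \<W>) (diamond T)"
      unfolding weakly_approximable_def using weak_cpt_to_fin[OF nW nT] by blast
  qed
  show ?thesis using A1 A2 A3 A4 A5 A6 by blast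
qed

end
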